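(* Let $\Phi$ be a finite NCIFS on $X\subset\mathbb R^d$, let $t_0>0$, and let $(\alpha_n)$ be a sequence with $\alpha_n\ge1$ and $\alpha_n\to\infty$. Then there exist sets $I^{(n)}_f\subset I^{(n)}$ such that the subsystem $\Phi_f$, with $\Phi_f^{(n)}=(\phi^{(n)}_a)_{a\in I^{(n)}_f}$, has the following properties: - $\underline P^{\Phi_f}(t)=\underline P^{\Phi}(t)$ for all $t\ge t_0$; - for all $n$, \[\rho_n(\Phi_f):=\max_{a,b\in I^{(n)}_f}\frac{\|D\phi^{(n)}_a\|}{\|D\phi^{(n)}_b\|}\le\alpha_n\,(\# I^{(n)})^{1/t_0}.\]
   Context: Fix $d\in\mathbb N$ and a compact set $X\subset\mathbb R^d$ equal to the closure of its interior, such that $\partial X$ is smooth or $X$ is convex. $\|D\phi\|:=\sup_{x\in X}|\phi'(x)|$ for a conformal map $\phi$. An NCIFS $\Phi$ on $X$ is a sequence $\Phi^{(j)}=(\phi^{(j)}_i:X\to X)_{i\in I^{(j)}}$, $j\ge1$, of families indexed by finite or countably infinite sets, satisfying: - (open set condition) images of $\operatorname{int}X$ under distinct maps of the same $\Phi^{(j)}$ are disjoint; - (conformality) there is an open connected $V\supset X$ such that all maps extend to $C^1$ conformal diffeomorphisms of $V$ into $V$; - (bounded distortion) there is $K\ge1$ with $|\phi'(x)|\le K|\phi'(y)|$ for $x,y\in V$ and every composition $\phi=\phi^{(k)}_{\omega_k}\circ\cdots\circ\phi^{(l)}_{\omega_l}$, $k\le l$; - (uniform contraction) $\|D\phi^{(j)}_i\|\le\eta<1$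 for all $i,j$. Finite means every $I^{(j)}$ is finite. For $\omega\in I^n=\prod_{j\le n}I^{(j)}$ let $\phi_\omega=\phi^{(1)}_{\omega_1}\circ\cdots\circ\phi^{(n)}_{\omega_n}$. For a system $\Psi$, $Z^\Psi_n(t)=\sum_{\omega\in I^n}\|D\phi_\omega\|^t$ over its words, and $\underline P^\Psi(t)=\liminf_n\frac1n\log Z^\Psi_n(t)$. *)

theory Defs
  imports "HOL-Analysis.Analysis"
begin

(* C^k regularity on an (open) set U, via Frechet derivatives whose directional
   components are again C^(k-1).  In finite dimensions this is the usual C^k. *)
fun Ck_on :: "nat \<Rightarrow> ('a::euclidean_space \<Rightarrow> 'b::real_normed_vector) \<Rightarrow> 'a set \<Rightarrow> bool" where
  "Ck_on 0 f U = continuous_on U f"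
| "Ck_on (Suc k) f U =
     (\<exists>f'. (\<forall>x\<in>U. (f has_derivative f' x) (at x)) \<and> (\<forall>v. Ck_on k (\<lambda>x. f' x v) U))"

definition smooth_on :: "('a::euclidean_space \<Rightarrow> 'b::real_normed_vector) \<Rightarrow> 'a set \<Rightarrow> bool" where
  "smooth_on f U \<longleftrightarrow> (\<forall>k. Ck_on k f U)"

definition smooth_boundary :: "'a::euclidean_space set \<Rightarrow> bool" where
  "smooth_boundary X \<longleftrightarrow>
     (\<forall>p\<in>frontier X. \<exists>U (g::'a \<Rightarrow> real). open U \<and> p \<in> U \<and> smooth_on g U \<and>
        frechet_derivative g (at p) \<noteq> (\<lambda>v. 0) \<and> X \<inter> U = {x\<in>U. g x \<le> 0})"

definition conf_deriv :: "('a::euclidean_space \<Rightarrow> 'a) \<Rightarrow> 'a \<Rightarrow> real" where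
  "conf_deriv f x = onorm (frechet_derivative f (at x))"

definition normD :: "'a::euclidean_space set \<Rightarrow> ('a \<Rightarrow> 'a) \<Rightarrow> real" where
  "normD X f = (SUP x\<in>X. conf_deriv f x)"

(* C^1 conformal diffeomorphism of V into V (injective, C^1, derivative everywhere
   a nonzero similarity; the inverse is then C^1 by the inverse function theorem) *)
definition conformal_C1_into :: "'a::euclidean_space set \<Rightarrow> ('a \<Rightarrow> 'a) \<Rightarrow> bool" where
  "conformal_C1_into V f \<longleftrightarrow>
     Ck_on 1 f V \<and> inj_on f V \<and> f ` V \<subseteq> V \<and>
     (\<forall>x\<in>V. \<exists>c>0. \<forall>v. norm (frechet_derivative f (at x) v) = c * norm v)"

primrec wcomp :: "(nat \<Rightarrow> 'i \<Rightarrow> 'a \<Rightarrow> 'a) \<Rightarrow> (nat \<Rightarrow> 'i) \<Rightarrow> nat \<Rightarrow> nat \<Rightarrow> 'a \<Rightarrow> 'a" where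
  "wcomp Phi w k 0 = id"
| "wcomp Phi w k (Suc m) = wcomp Phi w k m \<circ> Phi (k + m) (w (k + m))"

definition NCIFS :: "'a::euclidean_space set \<Rightarrow> (nat \<Rightarrow> 'i set) \<Rightarrow> (nat \<Rightarrow> 'i \<Rightarrow> 'a \<Rightarrow> 'a) \<Rightarrow> bool" where
  "NCIFS X I Phi \<longleftrightarrow>
     (\<forall>j\<ge>1. I j \<noteq> {} \<and> countable (I j) \<and> (\<forall>i\<in>I j. Phi j i ` X \<subseteq> X)) \<and>
     (\<forall>j\<ge>1. \<forall>a\<in>I j. \<forall>b\<in>I j. a \<noteq> b \<longrightarrow>
        Phi j a ` interior X \<inter> Phi j b ` interior X = {}) \<and>
     (\<exists>V. open V \<and> connected V \<and> X \<subseteq> V \<and>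
        (\<forall>j\<ge>1. \<forall>i\<in>I j. conformal_C1_into V (Phi j i)) \<and>
        (\<exists>K\<ge>1. \<forall>k\<ge>1. \<forall>m\<ge>1. \<forall>w. (\<forall>i. k \<le> i \<and> i < k + m \<longrightarrow> w i \<in> I i) \<longrightarrow>
            (\<forall>x\<in>V. \<forall>y\<in>V. conf_deriv (wcomp Phi w k m) x \<le> K * conf_deriv (wcomp Phi w k m) y))) \<and>
     (\<exists>\<eta><1. \<forall>j\<ge>1. \<forall>i\<in>I j. normD X (Phi j i) \<le> \<eta>)"

definition Zn :: "'a::euclidean_space set \<Rightarrow> (nat \<Rightarrow> 'i set) \<Rightarrow> (nat \<Rightarrow> 'i \<Rightarrow> 'a \<Rightarrow> 'a) \<Rightarrow> nat \<Rightarrow> real \<Rightarrow> real" where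
  "Zn X I Phi n t = (\<Sum>w\<in>Pi\<^sub>E {1..n} I. normD X (wcomp Phi w 1 n) powr t)"

definition lower_pressure :: "'a::euclidean_space set \<Rightarrow> (nat \<Rightarrow> 'i set) \<Rightarrow> (nat \<Rightarrow> 'i \<Rightarrow> 'a \<Rightarrow> 'a) \<Rightarrow> real \<Rightarrow> ereal" where
  "lower_pressure X I Phi t = liminf (\<lambda>n. ereal (ln (Zn X I Phi n t) / real n))"

definition rho :: "'a::euclidean_space set \<Rightarrow> (nat \<Rightarrow> 'i set) \<Rightarrow> (nat \<Rightarrow> 'i \<Rightarrow> 'a \<Rightarrow> 'a) \<Rightarrow> nat \<Rightarrow> real" where
  "rho X I Phi n = Max {normD X (Phi n a) / normD X (Phi n b) | a b. a \<in> I n \<and> b \<in> I n}"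

end

theory Submission
  imports Defs
begin


lemma onorm_conformal:
  fixes L :: "'a::euclidean_space \<Rightarrow> 'b::real_normed_vector"
  assumes "bounded_linear L" "\<And>v. norm (L v) = c * norm v"
  shows "onorm L = c"
proof (rule antisym)
  show "onorm L \<le> c" by (rule onorm_le) (simp add: assms(2))
next
  obtain b :: 'a where "b \<in> Basis" using nonempty_Basis by blast
  then have nb: "norm b = 1" by simp
  have "c = norm (L b)" using assms(2) nb by simp
  also have "\<dots> \<le> onorm L * norm b" by (rule onorm[OF assms(1)])
  finally show "c \<le> onorm L" using nb by simp
qed

definition cgood :: "'a::euclidean_space set \<Rightarrow> ('a \<Rightarrow> 'a) \<Rightarrow> bool" where
 "cgood V g \<longleftrightarrow> g ` V \<subseteq> V \<and> (\<forall>x\<in>V. (g has_derivative frechet_derivative g (at x)) (at x) \<and>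
     conf_deriv g x > 0 \<and> (\<forall>v. norm (frechet_derivative g (at x) v) = conf_deriv g x * norm v))"

lemma conf_deriv_id: "conf_deriv id x = 1"
proof -
  have d: "(id has_derivative id) (at x)"
    unfolding id_def by (rule has_derivative_ident)
  have fd: "frechet_derivative id (at x) = id"
    using frechet_derivative_at[OF d] by simp
  show ?thesis
    unfolding conf_deriv_def fd by (rule onorm_conformal) (auto simp: bounded_linear_ident[unfolded id_def[symmetric]])
qed

lemma cgood_id: "cgood V id"
proof -
  have d: "(id has_derivative id) (at x)" for x :: 'a
    unfolding id_def by (rule has_derivative_ident)
  have fd: "frechet_derivative id (at x) = id" for x :: 'a
    using frechet_derivative_at[OF d] by simp
  have "conf_deriv id x = 1" for x :: 'a
    unfolding conf_deriv_def fd by (rule onorm_conformal) (auto simp: bounded_linear_ident[unfolded id_def[symmetric]])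
  then show ?thesis unfolding cgood_def using d fd by auto
qed

lemma cgood_conformal:
  assumes "conformal_C1_into V f" "open V"
  shows "cgood V f"
proof -
  from assms obtain f' where d: "\<forall>x\<in>V. (f has_derivative f' x) (at x)"
    and c: "\<forall>x\<in>V. \<exists>c>0. \<forall>v. norm (frechet_derivative f (at x) v) = c * norm v"
    and im: "f ` V \<subseteq> V"
    unfolding conformal_C1_into_def by auto
  have "(f has_derivative frechet_derivative f (at x)) (at x) \<and>
     conf_deriv f x > 0 \<and> (\<forall>v. norm (frechet_derivative f (at x) v) = conf_deriv f x * norm v)"
    if x: "x \<in> V" for x
  proof -
    have dd: "(f has_derivative frechet_derivative f (at x)) (at x)"
      using d x frechet_derivative_at by metis
    obtain k where k: "k > 0" "\<forall>v. norm (frechet_derivative f (at x) v) = k * norm v"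
      using c x by blast
    have "conf_deriv f x = k" unfolding conf_deriv_def
      by (rule onorm_conformal) (use dd k in \<open>auto dest: has_derivative_bounded_linear\<close>)
    then show ?thesis using dd k by auto
  qed
  then show ?thesis unfolding cgood_def using im by auto
qed

lemma cgood_comp:
  assumes f: "cgood V f" and g: "cgood V g"
  shows "cgood V (f \<circ> g)" and "\<And>x. x \<in> V \<Longrightarrow> conf_deriv (f \<circ> g) x = conf_deriv f (g x) * conf_deriv g x"
proof -
  have main: "((f \<circ> g) has_derivative frechet_derivative (f \<circ> g) (at x)) (at x) \<and>
     conf_deriv (f \<circ> g) x = conf_deriv f (g x) * conf_deriv g x \<and>
     (\<forall>v. norm (frechet_derivative (f \<circ> g) (at x) v) = conf_deriv (f \<circ> g) x * norm v)"
    if x: "x \<in> V" for x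
  proof -
    have gx: "g x \<in> V" using g x unfolding cgood_def by auto
    have dg: "(g has_derivative frechet_derivative g (at x)) (at x)"
      and ng: "\<And>v. norm (frechet_derivative g (at x) v) = conf_deriv g x * norm v"
      using g x unfolding cgood_def by auto
    have df: "(f has_derivative frechet_derivative f (at (g x))) (at (g x))"
      and nf: "\<And>v. norm (frechet_derivative f (at (g x)) v) = conf_deriv f (g x) * norm v"
      using f gx unfolding cgood_def by auto
    have dc: "((f \<circ> g) has_derivative (frechet_derivative f (at (g x)) \<circ> frechet_derivative g (at x))) (at x)"
      by (rule diff_chain_at[OF dg df])
    have fd: "frechet_derivative (f \<circ> g) (at x) = frechet_derivative f (at (g x)) \<circ> frechet_derivative g (at x)"
      using frechet_derivative_at[OF dc] by simp
    have nn: "norm (frechet_derivative (f \<circ> g) (at x) v) = (conf_deriv f (g x) * conf_deriv g x) * norm v" for v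
      unfolding fd using nf ng by simp
    have cd: "conf_deriv (f \<circ> g) x = conf_deriv f (g x) * conf_deriv g x"
      unfolding conf_deriv_def
      by (rule onorm_conformal) (use dc nn fd in \<open>auto dest: has_derivative_bounded_linear simp: conf_deriv_def\<close>)
    show ?thesis using dc fd nn cd by simp
  qed
  have im: "(f \<circ> g) ` V \<subseteq> V" using f g unfolding cgood_def by (auto simp: image_subset_iff)
  have pos: "conf_deriv f (g x) > 0 \<and> conf_deriv g x > 0" if "x \<in> V" for x
    using f g that unfolding cgood_def by (auto simp: image_subset_iff)
  show "cgood V (f \<circ> g)" unfolding cgood_def
    using im main pos by auto
  show "\<And>x. x \<in> V \<Longrightarrow> conf_deriv (f \<circ> g) x = conf_deriv f (g x) * conf_deriv g x"
    using main by blast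
qed

lemma wcomp_add: "wcomp Phi w k (m1 + m2) = wcomp Phi w k m1 \<circ> wcomp Phi w (k + m1) m2"
  by (induction m2) (simp_all add: algebra_simps comp_assoc)

lemma wcomp_cong: "(\<And>i. k \<le> i \<Longrightarrow> i < k + m \<Longrightarrow> w i = w' i) \<Longrightarrow> wcomp Phi w k m = wcomp Phi w' k m"
  by (induction m) auto

lemma wcomp_good: "(\<And>i. k \<le> i \<Longrightarrow> i < k + m \<Longrightarrow> cgood V (Phi i (w i))) \<Longrightarrow> cgood V (wcomp Phi w k m)"
  by (induction m) (auto simp: cgood_id intro: cgood_comp)

lemma wcomp_maps: "(\<And>i. k \<le> i \<Longrightarrow> i < k + m \<Longrightarrow> Phi i (w i) ` X \<subseteq> X) \<Longrightarrow> wcomp Phi w k m ` X \<subseteq> X"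
proof (induction m)
  case 0 then show ?case by simp
next
  case (Suc m)
  have "wcomp Phi w k m ` X \<subseteq> X" using Suc by auto
  moreover have "Phi (k+m) (w (k+m)) ` X \<subseteq> X" using Suc.prems by auto
  ultimately show ?case by (auto simp: image_subset_iff)
qed



locale sys =
  fixes X :: "'a::euclidean_space set" and I :: "nat \<Rightarrow> 'i set"
    and Phi :: "nat \<Rightarrow> 'i \<Rightarrow> 'a \<Rightarrow> 'a" and V :: "'a set" and K :: real
  assumes Xne: "X \<noteq> {}" and XV: "X \<subseteq> V"
    and Ifin: "\<And>j. j \<ge> 1 \<Longrightarrow> finite (I j)" and Ine: "\<And>j. j \<ge> 1 \<Longrightarrow> I j \<noteq> {}"
    and maps: "\<And>j i. j \<ge> 1 \<Longrightarrow> i \<in> I j \<Longrightarrow> Phi j i ` X \<subseteq> X"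
    and good: "\<And>j i. j \<ge> 1 \<Longrightarrow> i \<in> I j \<Longrightarrow> cgood V (Phi j i)"
    and K1: "K \<ge> 1"
    and dist: "\<And>k m w x y. k \<ge> 1 \<Longrightarrow> m \<ge> 1 \<Longrightarrow> (\<forall>i. k \<le> i \<and> i < k + m \<longrightarrow> w i \<in> I i) \<Longrightarrow>
        x \<in> V \<Longrightarrow> y \<in> V \<Longrightarrow> conf_deriv (wcomp Phi w k m) x \<le> K * conf_deriv (wcomp Phi w k m) y"
begin

lemma bounds:
  assumes k: "k \<ge> 1" and adm: "\<And>i. k \<le> i \<Longrightarrow> i < k + m \<Longrightarrow> w i \<in> I i"
  defines "g \<equiv> wcomp Phi w k m"
  shows "cgood V g" "g ` X \<subseteq> X" "\<And>x. x \<in> X \<Longrightarrow> conf_deriv g x \<le> normD X g"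
    "\<And>x. x \<in> X \<Longrightarrow> normD X g \<le> K * conf_deriv g x" "normD X g > 0"
proof -
  show cg: "cgood V g" unfolding g_def
    by (rule wcomp_good) (use k adm good in auto)
  show "g ` X \<subseteq> X" unfolding g_def
    by (rule wcomp_maps) (use k adm maps in auto)
  have pos: "conf_deriv g x > 0" if "x \<in> X" for x using cg that XV unfolding cgood_def by auto
  have le: "conf_deriv g x \<le> K * conf_deriv g y" if "x \<in> X" "y \<in> X" for x y
  proof (cases "m = 0")
    case True
    then have "g = id" unfolding g_def by simp
    then have "conf_deriv g x = conf_deriv g y" by (simp add: conf_deriv_id)
    moreover have "conf_deriv g y > 0" using pos that by auto
    ultimately show ?thesis using K1 by (simp add: mult_le_cancel_right1)
  next
    case False
    then show ?thesis unfolding g_def using dist[of k m w x y] k adm that XV by auto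
  qed
  obtain y0 where y0: "y0 \<in> X" using Xne by auto
  have bdd: "bdd_above (conf_deriv g ` X)"
    by (rule bdd_aboveI[where M="K * conf_deriv g y0"]) (use le y0 in auto)
  show up: "\<And>x. x \<in> X \<Longrightarrow> conf_deriv g x \<le> normD X g"
    unfolding normD_def by (rule cSUP_upper[OF _ bdd])
  show "\<And>x. x \<in> X \<Longrightarrow> normD X g \<le> K * conf_deriv g x"
    unfolding normD_def by (rule cSUP_least) (use Xne le in auto)
  show "normD X g > 0" using up[OF y0] pos[OF y0] by linarith
qed

lemma bounds1:
  assumes "r \<ge> 1" "a \<in> I r"
  shows "cgood V (Phi r a)" "Phi r a ` X \<subseteq> X" "\<And>x. x \<in> X \<Longrightarrow> conf_deriv (Phi r a) x \<le> normD X (Phi r a)"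
    "\<And>x. x \<in> X \<Longrightarrow> normD X (Phi r a) \<le> K * conf_deriv (Phi r a) x" "normD X (Phi r a) > 0"
proof -
  have ad: "\<And>i. r \<le> i \<Longrightarrow> i < r + 1 \<Longrightarrow> a \<in> I i" using assms(2)
    by (metis add.commute le_antisym less_Suc_eq_le plus_1_eq_Suc)
  note bb = bounds[of r 1 "\<lambda>_. a", OF assms(1) ad]
  have e: "wcomp Phi (\<lambda>_. a) r 1 = Phi r a" by (simp add: fun_eq_iff)
  show "cgood V (Phi r a)" "Phi r a ` X \<subseteq> X" "\<And>x. x \<in> X \<Longrightarrow> conf_deriv (Phi r a) x \<le> normD X (Phi r a)"
    "\<And>x. x \<in> X \<Longrightarrow> normD X (Phi r a) \<le> K * conf_deriv (Phi r a) x" "normD X (Phi r a) > 0"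
    using bb unfolding e by auto
qed

lemma swap:
  assumes w: "w \<in> Pi\<^sub>E {1..n} I" and r: "r \<in> {1..n}" and a: "a \<in> I r" and b: "b \<in> I r"
  shows "normD X (wcomp Phi (w(r:=a)) 1 n) \<le>
     K^3 * (normD X (Phi r a) / normD X (Phi r b)) * normD X (wcomp Phi (w(r:=b)) 1 n)"
proof -
  define A where "A = wcomp Phi w 1 (r - 1)"
  define B where "B = wcomp Phi w (r + 1) (n - r)"
  have decomp: "wcomp Phi (w(r:=c)) 1 n = A \<circ> (Phi r c \<circ> B)" for c
  proof -
    have n: "n = (r - 1) + (1 + (n - r))" using r by auto
    have "wcomp Phi (w(r:=c)) 1 n = wcomp Phi (w(r:=c)) 1 (r - 1) \<circ> (wcomp Phi (w(r:=c)) r 1 \<circ> wcomp Phi (w(r:=c)) (r + 1) (n - r))"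
      using r by (subst n, subst wcomp_add, subst wcomp_add) (simp add: add.commute)
    also have "wcomp Phi (w(r:=c)) 1 (r - 1) = A" unfolding A_def by (rule wcomp_cong) auto
    also have "wcomp Phi (w(r:=c)) (r + 1) (n - r) = B" unfolding B_def by (rule wcomp_cong) auto
    also have "wcomp Phi (w(r:=c)) r 1 = Phi r c" by (simp add: fun_eq_iff)
    finally show ?thesis .
  qed
  have admw: "w i \<in> I i" if "1 \<le> i" "i \<le> n" for i using w that by auto
  have rr: "r \<ge> 1" "r \<le> n" using r by auto
  note bA = bounds[of 1 "r - 1" w, folded A_def]
  note bB = bounds[of "r + 1" "n - r" w, folded B_def]
  have gA: "cgood V A" and mA: "A ` X \<subseteq> X" and uA: "\<And>x. x \<in> X \<Longrightarrow> conf_deriv A x \<le> normD X A"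
    and lA: "\<And>x. x \<in> X \<Longrightarrow> normD X A \<le> K * conf_deriv A x" and pA: "normD X A > 0"
    using bA admw rr by auto
  have gB: "cgood V B" and mB: "B ` X \<subseteq> X" and uB: "\<And>x. x \<in> X \<Longrightarrow> conf_deriv B x \<le> normD X B"
    and lB: "\<And>x. x \<in> X \<Longrightarrow> normD X B \<le> K * conf_deriv B x" and pB: "normD X B > 0"
    using bB admw rr by auto
  have cd: "conf_deriv (wcomp Phi (w(r:=c)) 1 n) x =
      conf_deriv A (Phi r c (B x)) * (conf_deriv (Phi r c) (B x) * conf_deriv B x)" if c: "c \<in> I r" and x: "x \<in> X" for c x
  proof -
    have g1: "cgood V (Phi r c \<circ> B)" using cgood_comp(1)[OF bounds1(1)[OF rr(1) c] gB] .
    have "conf_deriv (A \<circ> (Phi r c \<circ> B)) x = conf_deriv A ((Phi r c \<circ> B) x) * conf_deriv (Phi r c \<circ> B) x"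
      using cgood_comp(2)[OF gA g1] x XV by auto
    also have "conf_deriv (Phi r c \<circ> B) x = conf_deriv (Phi r c) (B x) * conf_deriv B x"
      using cgood_comp(2)[OF bounds1(1)[OF rr(1) c] gB] x XV by auto
    finally have "conf_deriv (A \<circ> (Phi r c \<circ> B)) x = conf_deriv A ((Phi r c \<circ> B) x) * (conf_deriv (Phi r c) (B x) * conf_deriv B x)" .
    then show ?thesis unfolding decomp by (simp only: comp_apply)
  qed
  have BX: "B x \<in> X" if "x \<in> X" for x using mB that by auto
  have PX: "Phi r c (B x) \<in> X" if "x \<in> X" "c \<in> I r" for x c using bounds1(2)[OF rr(1) that(2)] BX[OF that(1)] by auto
  note pa = bounds1[OF rr(1) a] and pb = bounds1[OF rr(1) b]
  have cpos: "conf_deriv f y > 0" if "cgood V f" "y \<in> X" for f y using that XV unfolding cgood_def by auto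
  have wa: "\<And>i. 1 \<le> i \<Longrightarrow> i < 1 + n \<Longrightarrow> (w(r:=c)) i \<in> I i" if "c \<in> I r" for c
    using admw that by auto
  have up: "normD X (wcomp Phi (w(r:=a)) 1 n) \<le> normD X A * (normD X (Phi r a) * normD X B)"
    unfolding normD_def[of X "wcomp Phi (w(r:=a)) 1 n"]
  proof (rule cSUP_least)
    show "X \<noteq> {}" by (rule Xne)
  next
    fix x assume x: "x \<in> X"
    have "conf_deriv A (Phi r a (B x)) \<le> normD X A" using uA PX[OF x a] .
    moreover have "conf_deriv (Phi r a) (B x) \<le> normD X (Phi r a)" using pa(3) BX[OF x] .
    moreover have "conf_deriv B x \<le> normD X B" using uB x .
    moreover have "conf_deriv A (Phi r a (B x)) > 0" using cpos[OF gA PX[OF x a]] .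
    moreover have "conf_deriv (Phi r a) (B x) > 0" using cpos[OF pa(1) BX[OF x]] .
    moreover have "conf_deriv B x > 0" using cpos[OF gB x] .
    ultimately show "conf_deriv (wcomp Phi (w(r:=a)) 1 n) x \<le> normD X A * (normD X (Phi r a) * normD X B)"
      unfolding cd[OF a x] by (intro mult_mono) auto
  qed
  obtain x0 where x0: "x0 \<in> X" using Xne by auto
  have lo: "normD X A / K * (normD X (Phi r b) / K * (normD X B / K)) \<le> normD X (wcomp Phi (w(r:=b)) 1 n)"
  proof -
    have "normD X A / K \<le> conf_deriv A (Phi r b (B x0))" using lA[OF PX[OF x0 b]] K1 by (simp add: field_simps)
    moreover have "normD X (Phi r b) / K \<le> conf_deriv (Phi r b) (B x0)" using pb(4)[OF BX[OF x0]] K1 by (simp add: field_simps)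
    moreover have "normD X B / K \<le> conf_deriv B x0" using lB[OF x0] K1 by (simp add: field_simps)
    moreover have "normD X A / K \<ge> 0" "normD X (Phi r b) / K \<ge> 0" "normD X B / K \<ge> 0"
      using pA pb(5) pB K1 by auto
    ultimately have "normD X A / K * (normD X (Phi r b) / K * (normD X B / K)) \<le> conf_deriv (wcomp Phi (w(r:=b)) 1 n) x0"
      unfolding cd[OF b x0] by (intro mult_mono) (auto intro: mult_nonneg_nonneg order.trans)
    also have "\<dots> \<le> normD X (wcomp Phi (w(r:=b)) 1 n)"
      using bounds(3)[of 1 n "w(r:=b)", OF _ wa[OF b] x0] by simp
    finally show ?thesis .
  qed
  have e: "normD X A * (normD X (Phi r a) * normD X B) =
      K^3 * (normD X (Phi r a) / normD X (Phi r b)) * (normD X A / K * (normD X (Phi r b) / K * (normD X B / K)))"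
    using K1 pb(5) by (simp add: field_simps power3_eq_cube)
  have "K^3 * (normD X (Phi r a) / normD X (Phi r b)) \<ge> 0" using K1 pa(5) pb(5) by simp
  then have "K^3 * (normD X (Phi r a) / normD X (Phi r b)) * (normD X A / K * (normD X (Phi r b) / K * (normD X B / K)))
      \<le> K^3 * (normD X (Phi r a) / normD X (Phi r b)) * normD X (wcomp Phi (w(r:=b)) 1 n)"
    using lo by (intro mult_left_mono)
  then show ?thesis using up e by linarith
qed

end


lemma upd_PiE: "x \<in> S \<Longrightarrow> y \<in> T x \<Longrightarrow> f \<in> Pi\<^sub>E S T \<Longrightarrow> f(x:=y) \<in> Pi\<^sub>E S T"
  using PiE_fun_upd[of y T x f S] by (simp add: insert_absorb)

lemma admPiE: fixes n i :: nat shows "w \<in> Pi\<^sub>E {1..n} I \<Longrightarrow> 1 \<le> i \<Longrightarrow> i < 1 + n \<Longrightarrow> w i \<in> I i"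
proof -
  assume a: "w \<in> Pi\<^sub>E {1..n} I" "1 \<le> i" "i < 1 + n"
  then have "i \<in> {1..n}" by auto
  then show "w i \<in> I i" using a(1) by (auto simp: PiE_iff)
qed

context sys
begin

lemma step:
  fixes If :: "nat \<Rightarrow> 'i set" and t e :: real and n r :: nat and b :: 'i
  assumes t: "t > 0" and r: "r \<in> {1..n}" and sub: "\<And>i. i \<ge> 1 \<Longrightarrow> If i \<subseteq> I i" and b: "b \<in> If r"
    and sumR: "(\<Sum>a\<in>I r - If r. (K^3 * (normD X (Phi r a) / normD X (Phi r b))) powr t) \<le> e"
  shows "(\<Sum>w\<in>Pi\<^sub>E {1..n} (\<lambda>i. if i \<le> r - 1 then If i else I i). normD X (wcomp Phi w 1 n) powr t)
     \<le> (1 + e) * (\<Sum>w\<in>Pi\<^sub>E {1..n} (\<lambda>i. if i \<le> r then If i else I i). normD X (wcomp Phi w 1 n) powr t)"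
proof -
  define g where "g w = normD X (wcomp Phi w 1 n) powr t" for w
  define P0 where "P0 = Pi\<^sub>E {1..n} (\<lambda>i. if i \<le> r - 1 then If i else I i)"
  define P1 where "P1 = Pi\<^sub>E {1..n} (\<lambda>i. if i \<le> r then If i else I i)"
  define R where "R = I r - If r"
  define E where "E = {w\<in>P0. w r \<in> R}"
  define F where "F = {u\<in>P1. u r = b}"
  have r1: "r \<ge> 1" "r \<le> n" using r by auto
  have gnn: "g w \<ge> 0" for w unfolding g_def by simp
  have fin0: "finite P0" unfolding P0_def
    by (rule finite_PiE) (use Ifin sub in \<open>auto intro: finite_subset\<close>)
  have fin1: "finite P1" unfolding P1_def
    by (rule finite_PiE) (use Ifin sub in \<open>auto intro: finite_subset\<close>)
  have finR: "finite R" unfolding R_def using Ifin r1 by auto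
  have P1I: "P1 \<subseteq> Pi\<^sub>E {1..n} I" unfolding P1_def by (rule PiE_mono) (use sub in auto)
  have split: "P0 = P1 \<union> E" and disj: "P1 \<inter> E = {}"
  proof -
    have "w \<in> P1 \<longleftrightarrow> w \<in> P0 \<and> w r \<in> If r" for w
    proof
      assume w: "w \<in> P1"
      have "w i \<in> (if i \<le> r - 1 then If i else I i)" if "i \<in> {1..n}" for i
      proof -
        have wi: "w i \<in> (if i \<le> r then If i else I i)" using w that unfolding P1_def PiE_iff by blast
        show ?thesis
        proof (cases "i = r")
          case True then show ?thesis using wi sub r1 by auto
        next
          case False then show ?thesis using wi r1 by (auto split: if_splits)
        qed
      qed
      moreover have "w r \<in> If r" using w r unfolding P1_def PiE_iff by (metis order_refl)
      ultimately show "w \<in> P0 \<and> w r \<in> If r" using w unfolding P0_def P1_def PiE_iff by auto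
    next
      assume w: "w \<in> P0 \<and> w r \<in> If r"
      have "w i \<in> (if i \<le> r then If i else I i)" if "i \<in> {1..n}" for i
      proof -
        have wi: "w i \<in> (if i \<le> r - 1 then If i else I i)" using w that unfolding P0_def PiE_iff by blast
        show ?thesis
        proof (cases "i = r")
          case True then show ?thesis using w by auto
        next
          case False then show ?thesis using wi r1 by (auto split: if_splits)
        qed
      qed
      then show "w \<in> P1" using w unfolding P0_def P1_def PiE_iff by auto
    qed
    moreover have "w r \<in> I r" if "w \<in> P0" for w
    proof -
      have "w r \<in> (if r \<le> r - 1 then If r else I r)" using that r unfolding P0_def PiE_iff by blast
      moreover have "\<not> (r \<le> r - 1)" using r1 by arith
      ultimately show ?thesis by simp
    qed
    ultimately show "P0 = P1 \<union> E" "P1 \<inter> E = {}" unfolding E_def R_def by auto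
  qed
  have bI: "b \<in> I r" using b sub r1 by auto
  define h :: "'i \<times> (nat \<Rightarrow> 'i) \<Rightarrow> nat \<Rightarrow> 'i" where "h = (\<lambda>(a, u). u(r := a))"
  have rng: "r \<in> {1..n}" using r .
  have inj: "inj_on h (R \<times> F)"
  proof (rule inj_onI)
    fix p q assume p: "p \<in> R \<times> F" and q: "q \<in> R \<times> F" and e: "h p = h q"
    obtain a u where pa: "p = (a, u)" by (cases p)
    obtain a' u' where qa: "q = (a', u')" by (cases q)
    have ur: "u r = b" "u' r = b" using p q pa qa unfolding F_def by auto
    have e': "u(r := a) = u'(r := a')" using e pa qa unfolding h_def by simp
    then have "a = a'" by (metis fun_upd_same)
    moreover have "u = u'"
    proof
      fix i show "u i = u' i"
      proof (cases "i = r")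
        case True then show ?thesis using ur by simp
      next
        case False then show ?thesis using fun_cong[OF e', of i] by simp
      qed
    qed
    ultimately show "p = q" using pa qa by simp
  qed
  have img: "h ` (R \<times> F) = E"
  proof
    show "h ` (R \<times> F) \<subseteq> E"
    proof
      fix x assume "x \<in> h ` (R \<times> F)"
      then obtain a u where a: "a \<in> R" and u: "u \<in> F" and x: "x = u(r := a)" unfolding h_def by auto
      have uP1: "u \<in> P1" using u unfolding F_def by auto
      have "u(r := a) \<in> P0"
      proof -
        have "u \<in> P0" using uP1 split by auto
        moreover have "a \<in> (if r \<le> r - 1 then If r else I r)" using a r1 unfolding R_def by auto
        ultimately show ?thesis unfolding P0_def using rng by (intro upd_PiE) auto
      qed
      then show "x \<in> E" using a x unfolding E_def by auto
    qed
  next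
    show "E \<subseteq> h ` (R \<times> F)"
    proof
      fix w assume w: "w \<in> E"
      then have wP0: "w \<in> P0" and wr: "w r \<in> R" unfolding E_def by auto
      have "w(r := b) \<in> P0" unfolding P0_def
        by (rule upd_PiE) (use wP0 bI r1 rng in \<open>auto simp: P0_def\<close>)
      then have "w(r := b) \<in> P1" using split b unfolding E_def R_def by auto
      then have "w(r := b) \<in> F" unfolding F_def by auto
      moreover have "w = h (w r, w(r := b))" unfolding h_def by simp
      ultimately show "w \<in> h ` (R \<times> F)" using wr by blast
    qed
  qed
  define c where "c a = (K^3 * (normD X (Phi r a) / normD X (Phi r b))) powr t" for a
  have finF: "finite F" unfolding F_def using fin1 by auto
  have ptw: "g (u(r := a)) \<le> c a * g u" if a: "a \<in> R" and u: "u \<in> F" for a u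
  proof -
    have uI: "u \<in> Pi\<^sub>E {1..n} I" using u P1I unfolding F_def by auto
    have ub: "u(r := b) = u" using u unfolding F_def by auto
    have aI: "a \<in> I r" using a unfolding R_def by auto
    have "normD X (wcomp Phi (u(r:=a)) 1 n) \<le> K^3 * (normD X (Phi r a) / normD X (Phi r b)) * normD X (wcomp Phi u 1 n)"
      using swap[OF uI rng aI bI] ub by simp
    moreover have "normD X (wcomp Phi (u(r:=a)) 1 n) \<ge> 0"
      using bounds(5)[of 1 n "u(r:=a)", OF order_refl admPiE[OF upd_PiE[OF rng aI uI]]] by simp
    moreover have "K^3 * (normD X (Phi r a) / normD X (Phi r b)) \<ge> 0"
      using K1 bounds1(5)[OF r1(1) aI] bounds1(5)[OF r1(1) bI] by simp
    moreover have "normD X (wcomp Phi u 1 n) \<ge> 0"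
      using bounds(5)[of 1 n u, OF order_refl admPiE[OF uI]] by simp
    ultimately show ?thesis unfolding g_def c_def
      by (metis powr_mono2 powr_mult t less_imp_le)
  qed
  have "sum g E = sum (g \<circ> h) (R \<times> F)" unfolding img[symmetric] by (rule sum.reindex[OF inj])
  also have "\<dots> = (\<Sum>a\<in>R. \<Sum>u\<in>F. g (u(r := a)))"
    unfolding sum.cartesian_product by (simp add: h_def case_prod_beta)
  also have "\<dots> \<le> (\<Sum>a\<in>R. \<Sum>u\<in>F. c a * g u)"
    by (intro sum_mono ptw)
  also have "\<dots> = (\<Sum>a\<in>R. c a) * (\<Sum>u\<in>F. g u)"
    by (subst sum_distrib_right) (simp only: sum_distrib_left)
  also have "\<dots> \<le> e * (\<Sum>u\<in>F. g u)"
    using sumR unfolding c_def R_def by (intro mult_right_mono sum_nonneg) (auto simp: gnn)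
  also have "\<dots> \<le> e * sum g P1"
  proof -
    have "0 \<le> (\<Sum>a\<in>R. c a)" unfolding c_def by (simp add: sum_nonneg)
    then have e0: "e \<ge> 0" using sumR unfolding c_def R_def by linarith
    have "sum g F \<le> sum g P1" using fin1 gnn unfolding F_def by (intro sum_mono2) auto
    then show ?thesis using e0 by (rule mult_left_mono)
  qed
  finally have sE: "sum g E \<le> e * sum g P1" .
  have "sum g P0 = sum g P1 + sum g E"
    unfolding split using fin0 split disj by (intro sum.union_disjoint) auto
  then have "sum g P0 \<le> (1 + e) * sum g P1" using sE by (simp add: algebra_simps)
  then show ?thesis unfolding g_def P0_def P1_def .
qed

lemma iter:
  fixes If :: "nat \<Rightarrow> 'i set" and t :: real and e :: "nat \<Rightarrow> real" and n :: nat and b :: "nat \<Rightarrow> 'i"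
  assumes t: "t > 0" and sub: "\<And>i. i \<ge> 1 \<Longrightarrow> If i \<subseteq> I i" and b: "\<And>r. r \<in> {1..n} \<Longrightarrow> b r \<in> If r"
    and sumR: "\<And>r. r \<in> {1..n} \<Longrightarrow> (\<Sum>a\<in>I r - If r. (K^3 * (normD X (Phi r a) / normD X (Phi r (b r)))) powr t) \<le> e r"
    and e0: "\<And>r. r \<in> {1..n} \<Longrightarrow> e r \<ge> 0"
  shows "Zn X I Phi n t \<le> (\<Prod>r\<in>{1..n}. (1 + e r)) * Zn X If Phi n t"
proof -
  define Z where "Z s = (\<Sum>w\<in>Pi\<^sub>E {1..n} (\<lambda>i. if i \<le> s then If i else I i). normD X (wcomp Phi w 1 n) powr t)" for s
  have ind: "s \<le> n \<Longrightarrow> Z 0 \<le> (\<Prod>r\<in>{1..s}. (1 + e r)) * Z s" for s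
  proof (induction s)
    case 0 then show ?case by simp
  next
    case (Suc s)
    have st: "Z s \<le> (1 + e (Suc s)) * Z (Suc s)"
      using step[of t "Suc s" n If "b (Suc s)" "e (Suc s)"] t sub b sumR Suc.prems unfolding Z_def by simp
    have pn: "(\<Prod>r\<in>{1..s}. (1 + e r)) \<ge> 0" using e0 Suc.prems by (intro prod_nonneg) auto
    have "Z 0 \<le> (\<Prod>r\<in>{1..s}. (1 + e r)) * Z s" using Suc by simp
    also have "\<dots> \<le> (\<Prod>r\<in>{1..s}. (1 + e r)) * ((1 + e (Suc s)) * Z (Suc s))"
      using st pn by (rule mult_left_mono)
    also have "\<dots> = (\<Prod>r\<in>{1..Suc s}. (1 + e r)) * Z (Suc s)"
      by (simp add: atLeastAtMostSuc_conv mult.assoc mult.commute)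
    finally show ?case .
  qed
  have "Z 0 = Zn X I Phi n t" unfolding Z_def Zn_def
    by (rule sum.cong) (auto intro!: PiE_cong)
  moreover have "Z n = Zn X If Phi n t" unfolding Z_def Zn_def
    by (rule sum.cong) (auto intro!: PiE_cong)
  ultimately show ?thesis using ind[of n] by simp
qed

end


lemma avg_small:
  fixes e :: "nat \<Rightarrow> real"
  assumes lim: "e \<longlonglongrightarrow> 0" and nn: "\<And>r. e r \<ge> 0" and d: "\<delta> > 0"
  shows "eventually (\<lambda>n. (\<Sum>r\<in>{1..n}. e r) / real n \<le> \<delta>) sequentially"
proof -
  have "eventually (\<lambda>r. e r < \<delta> / 2) sequentially"
    using lim d by (auto simp: tendsto_iff dist_real_def dest!: spec[of _ "\<delta>/2"] elim: eventually_mono)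
  then obtain N where N: "\<And>r. r \<ge> N \<Longrightarrow> e r < \<delta> / 2" unfolding eventually_sequentially by blast
  define S where "S = (\<Sum>r\<in>{1..N}. e r)"
  have S0: "S \<ge> 0" unfolding S_def using nn by (simp add: sum_nonneg)
  obtain M :: nat where M: "real M \<ge> 2 * S / \<delta>" using real_arch_simple by blast
  show ?thesis unfolding eventually_sequentially
  proof (intro exI[of _ "max (Suc N) (Suc M)"] allI impI)
    fix n assume n: "n \<ge> max (Suc N) (Suc M)"
    have npos: "real n > 0" using n by auto
    have "(\<Sum>r\<in>{1..n}. e r) = S + (\<Sum>r\<in>{N<..n}. e r)"
    proof -
      have "{1..n} = {1..N} \<union> {N<..n}" using n by auto
      moreover have "{1..N} \<inter> {N<..n} = {}" by auto
      ultimately show ?thesis unfolding S_def by (simp add: sum.union_disjoint)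
    qed
    also have "(\<Sum>r\<in>{N<..n}. e r) \<le> real (card {N<..n}) * (\<delta> / 2)"
      by (rule sum_bounded_above) (use N in \<open>auto simp: less_imp_le\<close>)
    also have "real (card {N<..n}) \<le> real n" by simp
    finally have "(\<Sum>r\<in>{1..n}. e r) \<le> S + real n * (\<delta> / 2)" using d by (simp add: mult_right_mono)
    moreover have "S \<le> real n * (\<delta> / 2)"
    proof -
      have "real n \<ge> real M" using n by simp
      then have "real n \<ge> 2 * S / \<delta>" using M by linarith
      then show ?thesis using d by (simp add: field_simps)
    qed
    ultimately have "(\<Sum>r\<in>{1..n}. e r) \<le> real n * \<delta>" by linarith
    then show "(\<Sum>r\<in>{1..n}. e r) / real n \<le> \<delta>" using npos by (simp add: field_simps)
  qed
qed

lemma liminf_squeeze: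
  fixes a b c :: "nat \<Rightarrow> real"
  assumes ab: "eventually (\<lambda>n. a n \<le> b n) sequentially"
    and ba: "eventually (\<lambda>n. b n \<le> a n + c n) sequentially"
    and c: "\<And>\<delta>. \<delta> > 0 \<Longrightarrow> eventually (\<lambda>n. c n \<le> \<delta>) sequentially"
  shows "liminf (\<lambda>n. ereal (b n)) = liminf (\<lambda>n. ereal (a n))"
proof (rule antisym)
  show "liminf (\<lambda>n. ereal (a n)) \<le> liminf (\<lambda>n. ereal (b n))"
    by (rule Liminf_mono) (use ab in \<open>auto elim: eventually_mono\<close>)
next
  show "liminf (\<lambda>n. ereal (b n)) \<le> liminf (\<lambda>n. ereal (a n))"
  proof (rule ereal_le_epsilon2)
    fix \<delta> :: real assume d: "\<delta> > 0"
    have "eventually (\<lambda>n. ereal (b n) \<le> ereal (a n) + ereal \<delta>) sequentially"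
      using eventually_conj[OF ba c[OF d]] by (auto elim: eventually_mono)
    then have "liminf (\<lambda>n. ereal (b n)) \<le> liminf (\<lambda>n. ereal (a n) + ereal \<delta>)"
      by (rule Liminf_mono)
    also have "\<dots> = liminf (\<lambda>n. ereal (a n)) + ereal \<delta>"
      by (rule Liminf_add_ereal_right) auto
    finally show "liminf (\<lambda>n. ereal (b n)) \<le> liminf (\<lambda>n. ereal (a n)) + ereal \<delta>" .
  qed
qed



theorem corollary5p2:
  fixes X :: "'a::euclidean_space set" and I :: "nat \<Rightarrow> 'i set"
    and Phi :: "nat \<Rightarrow> 'i \<Rightarrow> 'a \<Rightarrow> 'a" and t0 :: real and \<alpha> :: "nat \<Rightarrow> real"
  assumes "compact X" and "X = closure (interior X)" and "smooth_boundary X \<or> convex X"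
    and "NCIFS X I Phi" and "\<forall>j\<ge>1. finite (I j)"
    and "t0 > 0" and "\<forall>n\<ge>1. \<alpha> n \<ge> 1" and "filterlim \<alpha> at_top sequentially"
  shows "\<exists>If. (\<forall>n\<ge>1. If n \<subseteq> I n \<and> If n \<noteq> {}) \<and>
    (\<forall>t\<ge>t0. lower_pressure X If Phi t = lower_pressure X I Phi t) \<and>
    (\<forall>n\<ge>1. rho X If Phi n \<le> \<alpha> n * real (card (I n)) powr (1 / t0))"
proof -
  have ncifs: "NCIFS X I Phi" and fin: "\<And>j. j \<ge> 1 \<Longrightarrow> finite (I j)" and t0: "t0 > 0"
    and \<alpha>1: "\<And>n. n \<ge> 1 \<Longrightarrow> \<alpha> n \<ge> 1" and \<alpha>lim: "filterlim \<alpha> at_top sequentially"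
    using assms by auto
  from ncifs have ne: "\<And>j. j \<ge> 1 \<Longrightarrow> I j \<noteq> {}" and mp: "\<And>j i. j \<ge> 1 \<Longrightarrow> i \<in> I j \<Longrightarrow> Phi j i ` X \<subseteq> X"
    unfolding NCIFS_def by auto
  have Cge: "real (card (I n)) \<ge> 1" if "n \<ge> 1" for n
    using fin[OF that] ne[OF that] by (simp add: Suc_leI card_gt_0_iff)
  have Cp: "real (card (I n)) powr (1 / t0) \<ge> 1" if "n \<ge> 1" for n
    using Cge[OF that] t0 by (intro ge_one_powr_ge_zero) auto
  show ?thesis
  proof (cases "X = {}")
    case True
    show ?thesis
    proof (intro exI[of _ I] conjI allI impI)
      fix n :: nat assume n: "n \<ge> 1"
      show "I n \<subseteq> I n" "I n \<noteq> {}" using ne[OF n] by auto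
      define s where "s = normD X (Phi n (SOME a. a \<in> I n))"
      have ns: "normD X f = s" for f unfolding s_def normD_def True by simp
      have "{normD X (Phi n a) / normD X (Phi n b) | a b. a \<in> I n \<and> b \<in> I n} = {s / s}"
        using ne[OF n] unfolding ns by auto
      then have "rho X I Phi n = s / s" unfolding rho_def by simp
      also have "\<dots> \<le> 1" by (cases "s = 0") auto
      also have "1 \<le> \<alpha> n * real (card (I n)) powr (1 / t0)"
        using \<alpha>1[OF n] Cp[OF n] by (metis mult_mono' mult_1_right zero_le_one)
      finally show "rho X I Phi n \<le> \<alpha> n * real (card (I n)) powr (1 / t0)" .
    qed simp
  next
    case False
    from ncifs obtain V K where oV: "open V" and XV: "X \<subseteq> V"
      and conf: "\<And>j i. j \<ge> 1 \<Longrightarrow> i \<in> I j \<Longrightarrow> conformal_C1_into V (Phi j i)"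
      and K1: "K \<ge> 1"
      and dist: "\<And>k m w x y. k \<ge> 1 \<Longrightarrow> m \<ge> 1 \<Longrightarrow> (\<forall>i. k \<le> i \<and> i < k + m \<longrightarrow> w i \<in> I i) \<Longrightarrow>
        x \<in> V \<Longrightarrow> y \<in> V \<Longrightarrow> conf_deriv (wcomp Phi w k m) x \<le> K * conf_deriv (wcomp Phi w k m) y"
      unfolding NCIFS_def by metis
    interpret sys X I Phi V K
    proof
      show "\<And>j i. j \<ge> 1 \<Longrightarrow> i \<in> I j \<Longrightarrow> cgood V (Phi j i)"
        using conf oV cgood_conformal by blast
    qed (use False XV fin ne mp K1 dist in auto)
    define N where "N n a = normD X (Phi n a)" for n a
    define C where "C n = real (card (I n))" for n
    define M where "M n = Max ((\<lambda>a. N n a) ` I n)" for n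
    define den where "den n = \<alpha> n * C n powr (1 / t0)" for n
    define thr where "thr n = M n / den n" for n
    define If where "If n = (if n \<ge> 1 then {a \<in> I n. thr n \<le> N n a} else I n)" for n
    define bs where "bs n = (SOME a. a \<in> I n \<and> N n a = M n)" for n
    have Npos: "N n a > 0" if "n \<ge> 1" "a \<in> I n" for n a
      unfolding N_def using bounds1(5)[OF that] .
    have Mge: "N n a \<le> M n" if "n \<ge> 1" "a \<in> I n" for n a
      unfolding M_def using fin[OF that(1)] that(2) by (intro Max_ge) auto
    have bs: "bs n \<in> I n \<and> N n (bs n) = M n" if "n \<ge> 1" for n
    proof -
      have "M n \<in> (\<lambda>a. N n a) ` I n" unfolding M_def using fin[OF that] ne[OF that] by (intro Max_in) auto
      then have "\<exists>a. a \<in> I n \<and> N n a = M n" by auto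
      then show ?thesis unfolding bs_def by (rule someI_ex)
    qed
    have Mpos: "M n > 0" if "n \<ge> 1" for n using bs[OF that] Npos[OF that] by metis
    have den1: "den n \<ge> 1" if "n \<ge> 1" for n
      unfolding den_def C_def using \<alpha>1[OF that] Cp[OF that] by (metis mult_mono' mult_1_right zero_le_one)
    have thrM: "thr n \<le> M n" if "n \<ge> 1" for n
      unfolding thr_def using Mpos[OF that] den1[OF that] by (simp add: field_simps)
    have thrpos: "thr n > 0" if "n \<ge> 1" for n
      unfolding thr_def using Mpos[OF that] den1[OF that] by simp
    have bsIf: "bs n \<in> If n" if "n \<ge> 1" for n
      unfolding If_def using bs[OF that] thrM[OF that] that by simp
    have sub: "If n \<subseteq> I n" for n unfolding If_def by auto
    have subI: "\<And>i. i \<ge> 1 \<Longrightarrow> If i \<subseteq> I i" using sub by auto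
    show ?thesis
    proof (intro exI[of _ If] conjI allI impI)
      fix n :: nat assume n: "n \<ge> 1"
      show "If n \<subseteq> I n" by (rule sub)
      show "If n \<noteq> {}" using bsIf[OF n] by auto
      let ?S = "{normD X (Phi n a) / normD X (Phi n b) | a b. a \<in> If n \<and> b \<in> If n}"
      have finIf: "finite (If n)" using fin[OF n] sub finite_subset by blast
      have "?S \<subseteq> (\<lambda>p. normD X (Phi n (fst p)) / normD X (Phi n (snd p))) ` (If n \<times> If n)" by force
      then have finS: "finite ?S" using finIf by (meson finite_SigmaI finite_imageI finite_subset)
      have neS: "?S \<noteq> {}" using bsIf[OF n] by auto
      have "rho X If Phi n \<le> den n" unfolding rho_def
      proof (rule Max.boundedI[OF finS neS])
        fix x assume "x \<in> ?S"
        then obtain a b where x: "x = N n a / N n b" and a: "a \<in> If n" and b: "b \<in> If n" unfolding N_def by auto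
        have "N n a / N n b \<le> M n / thr n"
          using Mpos[OF n] Mge[OF n] a b sub thrpos[OF n] n unfolding If_def
          by (intro frac_le) (auto simp: less_imp_le)
        also have "M n / thr n = den n" unfolding thr_def using Mpos[OF n] den1[OF n] by simp
        finally show "x \<le> den n" using x by simp
      qed
      then show "rho X If Phi n \<le> \<alpha> n * real (card (I n)) powr (1 / t0)" unfolding den_def C_def .
    next
      fix t :: real assume tt0: "t \<ge> t0"
      show "lower_pressure X If Phi t = lower_pressure X I Phi t"
      proof -
        have t: "t > 0" using tt0 t0 by linarith
        define e where "e r = (K^3 / \<alpha> r) powr t" for r
        have e0: "e r \<ge> 0" for r unfolding e_def by simp
        have sumR: "(\<Sum>a\<in>I r - If r. (K^3 * (normD X (Phi r a) / normD X (Phi r (bs r)))) powr t) \<le> e r"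
          if r: "r \<ge> 1" for r
        proof -
          have Cr: "C r \<ge> 1" unfolding C_def using Cge[OF r] .
          have Cpp: "C r powr (1 / t0) > 0" using Cr by simp
          have \<alpha>r: "\<alpha> r \<ge> 1" using \<alpha>1[OF r] .
          define v where "v = (K^3 / den r) powr t"
          have trm: "(K^3 * (normD X (Phi r a) / normD X (Phi r (bs r)))) powr t \<le> v" if a: "a \<in> I r - If r" for a
          proof -
            have lt: "N r a < thr r" using a r unfolding If_def by auto
            have "K^3 * (N r a / M r) \<le> K^3 * (thr r / M r)"
              using lt Mpos[OF r] K1 by (intro mult_left_mono divide_right_mono) auto
            also have "K^3 * (thr r / M r) = K^3 / den r" unfolding thr_def using Mpos[OF r] by simp
            finally have le: "K^3 * (N r a / M r) \<le> K^3 / den r" .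
            have "0 < N r a" using Npos[OF r] a by auto
            then have "0 \<le> K^3 * (N r a / M r)" using Mpos[OF r] K1 by (intro mult_nonneg_nonneg) auto
            then show ?thesis using bs[OF r] le t unfolding v_def N_def by (metis powr_mono2 less_imp_le)
          qed
          have vle: "v * C r \<le> e r"
          proof -
            have "K^3 / den r = (K^3 / \<alpha> r) / C r powr (1 / t0)" unfolding den_def by simp
            then have "v = ((K^3 / \<alpha> r) / C r powr (1 / t0)) powr t" unfolding v_def by (simp only:)
            then have "v = e r / (C r powr (1 / t0)) powr t" unfolding e_def by (simp only: powr_divide)
            also have "(C r powr (1 / t0)) powr t = C r powr (t / t0)" by (simp add: powr_powr)
            finally have v: "v = e r / C r powr (t / t0)" .
            have "C r powr (t / t0) \<ge> C r powr 1" using Cr tt0 t0 by (intro powr_mono) auto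
            then have "C r powr (t / t0) \<ge> C r" using Cr by simp
            then have "e r / C r powr (t / t0) \<le> e r / C r" using Cr e0[of r] by (intro divide_left_mono) auto
            then show ?thesis unfolding v using Cr by (simp add: field_simps)
          qed
          have "(\<Sum>a\<in>I r - If r. (K^3 * (normD X (Phi r a) / normD X (Phi r (bs r)))) powr t)
              \<le> real (card (I r - If r)) * v" by (rule sum_bounded_above) (rule trm)
          also have "\<dots> \<le> C r * v" unfolding C_def using fin[OF r] v_def
            by (intro mult_right_mono) (auto simp: card_mono)
          finally show ?thesis using vle by (simp add: mult.commute)
        qed
        have ZIf: "Zn X I Phi n t \<le> (\<Prod>r\<in>{1..n}. (1 + e r)) * Zn X If Phi n t" for n
          by (rule iter[where b=bs, OF t subI]) (use bsIf sumR e0 in auto)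
        have Zpos: "Zn X If Phi n t > 0" if n: "n \<ge> 1" for n
          unfolding Zn_def
        proof (rule sum_pos)
          show "finite (Pi\<^sub>E {1..n} If)" using fin sub by (intro finite_PiE) (auto intro: finite_subset)
          show "Pi\<^sub>E {1..n} If \<noteq> {}" using bsIf by (auto simp: PiE_eq_empty_iff) (metis Suc_le_eq empty_iff le_simps(3) not_le)
          fix w assume "w \<in> Pi\<^sub>E {1..n} If"
          then have wI: "w \<in> Pi\<^sub>E {1..n} I" using PiE_mono[of "{1..n}" If I] sub by blast
          have "normD X (wcomp Phi w 1 n) > 0" using bounds(5)[of 1 n w, OF order_refl admPiE[OF wI]] by blast
          then show "normD X (wcomp Phi w 1 n) powr t > 0" by simp
        qed
        have Zle: "Zn X If Phi n t \<le> Zn X I Phi n t" for n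
          unfolding Zn_def
          by (rule sum_mono2) (use fin sub PiE_mono[of "{1..n}" If I] in \<open>auto intro!: finite_PiE\<close>)
        define a where "a n = ln (Zn X If Phi n t) / real n" for n
        define b where "b n = ln (Zn X I Phi n t) / real n" for n
        define c where "c n = (\<Sum>r\<in>{1..n}. e r) / real n" for n
        have ab: "eventually (\<lambda>n. a n \<le> b n) sequentially"
          unfolding eventually_sequentially
        proof (intro exI[of _ 1] allI impI)
          fix n :: nat assume n: "n \<ge> 1"
          have "ln (Zn X If Phi n t) \<le> ln (Zn X I Phi n t)" using Zpos[OF n] Zle[of n] by simp
          then show "a n \<le> b n" unfolding a_def b_def by (simp add: divide_right_mono)
        qed
        have ba: "eventually (\<lambda>n. b n \<le> a n + c n) sequentially"
          unfolding eventually_sequentially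
        proof (intro exI[of _ 1] allI impI)
          fix n :: nat assume n: "n \<ge> 1"
          have pp: "(\<Prod>r\<in>{1..n}. (1 + e r)) > 0" using e0 by (intro prod_pos) (auto intro: add_pos_nonneg)
          have "ln (Zn X I Phi n t) \<le> ln ((\<Prod>r\<in>{1..n}. (1 + e r)) * Zn X If Phi n t)"
            using ZIf[of n] Zpos[OF n] Zle[of n] by simp
          also have "\<dots> = ln (\<Prod>r\<in>{1..n}. (1 + e r)) + ln (Zn X If Phi n t)"
            using pp Zpos[OF n] by (rule ln_mult_pos)
          also have "ln (\<Prod>r\<in>{1..n}. (1 + e r)) = (\<Sum>r\<in>{1..n}. ln (1 + e r))"
            using e0 by (intro ln_prod) (auto, metis add_pos_nonneg less_numeral_extra(1) less_numeral_extra(3))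
          also have "\<dots> \<le> (\<Sum>r\<in>{1..n}. e r)" using e0 by (intro sum_mono ln_add_one_self_le_self)
          finally have "ln (Zn X I Phi n t) \<le> (\<Sum>r\<in>{1..n}. e r) + ln (Zn X If Phi n t)" by simp
          then show "b n \<le> a n + c n" unfolding a_def b_def c_def using n
            by (simp add: add_divide_distrib[symmetric] divide_right_mono add.commute)
        qed
        have elim: "e \<longlonglongrightarrow> 0"
        proof -
          have "(\<lambda>r. K^3 / \<alpha> r) \<longlonglongrightarrow> 0"
            by (rule tendsto_divide_0[OF tendsto_const]) (rule filterlim_at_top_imp_at_infinity[OF \<alpha>lim])
          moreover have "eventually (\<lambda>r. 0 \<le> K^3 / \<alpha> r) sequentially"
            unfolding eventually_sequentially using \<alpha>1 K1
            by (intro exI[of _ 1] allI impI) (auto intro!: divide_nonneg_pos simp: less_le_trans[OF zero_less_one])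
          ultimately show ?thesis unfolding e_def using t
            by (intro tendsto_zero_powrI) auto
        qed
        have cs: "eventually (\<lambda>n. c n \<le> \<delta>) sequentially" if "\<delta> > 0" for \<delta>
          unfolding c_def by (rule avg_small[OF elim e0 that])
        have "liminf (\<lambda>n. ereal (b n)) = liminf (\<lambda>n. ereal (a n))"
          by (rule liminf_squeeze[OF ab ba cs])
        then show ?thesis unfolding lower_pressure_def a_def b_def by simp
      qed
    qed
  qed
qed



end
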